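(* Let $\gamma\in[0,1)$ and let $\tau=(s_k,a_k,r_k,s_{k+1})_{k=1,\dots,T}$ be a (possibly random) trajectory of finite length $T$ in an MDP, with real rewards $r_k$. Let $Q^\pi:\mathcal S\times\mathcal A\to\mathbb R$ be a fixed function (the action-value function of a policy $\pi$). For $i\in\{1,2\}$ and $k\in\{1,\dots,T\}$ let $$\tilde Q^{(i)}(s_k,a_k)=Q^\pi(s_k,a_k)+\epsilon^{(i)}_k ,$$ where, conditionally on $\tau$, the noise terms are integrable with $\mathbb E[\epsilon^{(i)}_k\mid\tau]=0$, and the family $(\epsilon^{(1)}_k)_k$ is independent of the family $(\epsilon^{(2)}_k)_k$. Set $\tilde Q^{(i)}(s_k,a_k)=0$ for $k>T$. For a fixed $t\in\{1,\dots,T\}$ define recursively, for $i\in\{1,2\}$ and integers $k\ge t$, $h\ge 0$, $$V^{(i)}_{k,h}=\begin{cases} r_k+\gamma V^{(i)}_{k+1,h-1}, & h>0,\\ \tilde Q^{(i)}(s_k,a_k), & h=0,\end{cases}$$ with the convention $r_k=0$ and $V^{(i)}_{k,h}=0$ for $k>T$. Let $h^*_{(i)}\in\arg\max_{h>0}V^{(i)}_{t,h}$ (chosen by any fixed tie-breaking rule, as a function of $(V^{(i)}_{t,h})_h$ only), and, writing $j$ for the index in $\{1,2\}$ different from $i$, set $R^{(i)}_t=V^{(j)}_{t,h^*_{(i)}}$. For $0\le h\le T-t$ define $$Q^\pi_{t,h}=\sum_{l=0}^{h}\gamma^l r_{t+l}+\begin{cases}\gamma^{h+1}Q^\pi(s_{t+h+1},a_{t+h+1}),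 & h<T-t,\\ 0, & h=T-t.\end{cases}$$ Then for each $i\in\{1,2\}$, $$\mathbb E_{\tau,\epsilon}\big[R^{(i)}_t\big]\le \mathbb E_\tau\Big[\max_{0\le h\le T-t}Q^\pi_{t,h}\Big].$$
   Context: This is the "twin back-propagation" estimate: one estimator ($i$) selects the rollout length with maximal value, and the other estimator ($j$) evaluates the return along that rollout. Expectations are assumed finite. *)

theory Defs
  imports "HOL-Probability.Probability"
begin

definition traj_sigma ::
  "'w measure \<Rightarrow> 's measure \<Rightarrow> 'b measure \<Rightarrow> nat \<Rightarrow>
   (nat \<Rightarrow> 'w \<Rightarrow> 's) \<Rightarrow> (nat \<Rightarrow> 'w \<Rightarrow> 'b) \<Rightarrow> (nat \<Rightarrow> 'w \<Rightarrow> real) \<Rightarrow> 'w measure" where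
  "traj_sigma M S A T s a r =
     vimage_algebra (space M)
       (\<lambda>\<omega>. \<lambda>k\<in>{1..T}. (s k \<omega>, a k \<omega>, r k \<omega>, s (Suc k) \<omega>))
       (PiM {1..T} (\<lambda>_. S \<Otimes>\<^sub>M A \<Otimes>\<^sub>M borel \<Otimes>\<^sub>M S))"

definition noise_sigma :: "'w measure \<Rightarrow> nat \<Rightarrow> (nat \<Rightarrow> 'w \<Rightarrow> real) \<Rightarrow> 'w measure" where
  "noise_sigma M T e =
     vimage_algebra (space M) (\<lambda>\<omega>. \<lambda>k\<in>{1..T}. e k \<omega>) (PiM {1..T} (\<lambda>_. borel))"

definition cond_indep :: "'w measure \<Rightarrow> 'w measure \<Rightarrow> 'w measure \<Rightarrow> 'w measure \<Rightarrow> bool" where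
  "cond_indep M F G H \<longleftrightarrow>
     (\<forall>X\<in>sets G. \<forall>Y\<in>sets H. AE \<omega> in M.
        real_cond_exp M F (indicator (X \<inter> Y)) \<omega> =
        real_cond_exp M F (indicator X) \<omega> * real_cond_exp M F (indicator Y) \<omega>)"

text \<open>The recursion V_(k,h): rewards r, noisy estimates qt k = Qtilde(s_k,a_k);
  V_(k,h) = 0 for k > T (convention r_k = 0 and Qtilde = 0 beyond T).\<close>
fun Vrec :: "real \<Rightarrow> nat \<Rightarrow> (nat \<Rightarrow> real) \<Rightarrow> (nat \<Rightarrow> real) \<Rightarrow> nat \<Rightarrow> nat \<Rightarrow> real" where
  "Vrec \<gamma> T r qt k 0 = (if k \<le> T then qt k else 0)"
| "Vrec \<gamma> T r qt k (Suc h) = (if k \<le> T then r k + \<gamma> * Vrec \<gamma> T r qt (Suc k) h else 0)"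

definition Qth :: "real \<Rightarrow> nat \<Rightarrow> (nat \<Rightarrow> real) \<Rightarrow> (nat \<Rightarrow> real) \<Rightarrow> nat \<Rightarrow> nat \<Rightarrow> real" where
  "Qth \<gamma> T r q t h =
     (\<Sum>l=0..h. \<gamma> ^ l * r (t + l)) + (if h < T - t then \<gamma> ^ (h + 1) * q (t + h + 1) else 0)"

end

theory Submission
  imports Defs "HOL-Probability.Probability"
begin

lemma Vrec_formula:
  "Vrec \<gamma> T r qt k h = (\<Sum>l<h. if k + l \<le> T then \<gamma>^l * r (k+l) else 0)
      + (if k + h \<le> T then \<gamma>^h * qt (k+h) else 0)"
proof (induction h arbitrary: k)
  case 0
  then show ?case by simp
next
  case (Suc h)
  show ?case
  proof (cases "k \<le> T")
    case True
    have "Vrec \<gamma> T r qt k (Suc h) = r k + \<gamma> * Vrec \<gamma> T r qt (Suc k) h" using True by simp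
    also have "\<dots> = r k + \<gamma> * ((\<Sum>l<h. if Suc k + l \<le> T then \<gamma>^l * r (Suc k+l) else 0)
      + (if Suc k + h \<le> T then \<gamma>^h * qt (Suc k+h) else 0))" by (simp only: Suc.IH)
    also have "\<dots> = (\<Sum>l<Suc h. if k + l \<le> T then \<gamma>^l * r (k+l) else 0)
      + (if k + Suc h \<le> T then \<gamma>^(Suc h) * qt (k+Suc h) else 0)"
      unfolding sum.lessThan_Suc_shift using True
      by (simp add: sum_distrib_left distrib_left if_distrib mult.assoc cong: if_cong)
    finally show ?thesis .
  next
    case False
    then show ?thesis by simp
  qed
qed

lemma Vrec_add:
  "Vrec \<gamma> T r (\<lambda>k. q k + e k) k h = Vrec \<gamma> T r q k h + (if k + h \<le> T then \<gamma>^h * e (k+h) else 0)"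
  unfolding Vrec_formula by (simp add: distrib_left)

lemma Vrec_Qth:
  assumes "0 < h" "t \<le> T"
  shows "Vrec \<gamma> T r q t h = Qth \<gamma> T r q t (min (h-1) (T-t))"
proof (cases "t + h \<le> T")
  case True
  obtain h1 where h1: "h = Suc h1" using assms by (cases h) auto
  have e: "{0..h1} = {..<h}" using h1 by auto
  have "(\<Sum>l<h. if t + l \<le> T then \<gamma>^l * r (t+l) else 0) = (\<Sum>l<h. \<gamma>^l * r (t+l))"
    using True by (intro sum.cong) auto
  moreover have "min (h-1) (T-t) = h1" "h1 < T - t" using True h1 by auto
  ultimately show ?thesis using True unfolding Vrec_formula Qth_def e
    by (simp add: h1 atLeast0AtMost lessThan_Suc_atMost[symmetric])
next
  case False
  have "(\<Sum>l<h. if t + l \<le> T then \<gamma>^l * r (t+l) else 0) = (\<Sum>l<h. if l \<in> {0..T-t} then \<gamma>^l * r (t+l) else 0)"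
    using assms by (intro sum.cong) auto
  also have "\<dots> = (\<Sum>l\<in>{..<h} \<inter> {0..T-t}. \<gamma>^l * r (t+l))"
    by (simp add: sum.inter_restrict)
  also have "{..<h} \<inter> {0..T-t} = {0..T-t}" using False assms by auto
  finally show ?thesis using False assms unfolding Vrec_formula Qth_def
    by (auto simp add: min_def)
qed

lemma Vrec_stable:
  "T < k + h \<Longrightarrow> Vrec \<gamma> T r qt k h = Vrec \<gamma> T r qt k (T + 1 - k)"
proof (induction h arbitrary: k)
  case 0
  then show ?case by simp
next
  case (Suc h)
  show ?case
  proof (cases "k \<le> T")
    case True
    then have "T + 1 - k = Suc (T - k)" by simp
    moreover have "Vrec \<gamma> T r qt (Suc k) h = Vrec \<gamma> T r qt (Suc k) (T + 1 - Suc k)"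
      using Suc by simp
    ultimately show ?thesis using True by simp
  next
    case False
    then show ?thesis by simp
  qed
qed

lemma Vrec_argmax:
  assumes "t \<le> T"
  shows "\<exists>h>0. \<forall>h'>0. Vrec \<gamma> T r qt t h' \<le> Vrec \<gamma> T r qt t h"
proof -
  let ?v = "\<lambda>h. Vrec \<gamma> T r qt t h"
  let ?n = "T + 1 - t"
  have ne: "?v ` {1..?n} \<noteq> {}" using assms by auto
  obtain h0 where h0: "h0 \<in> {1..?n}" "?v h0 = Max (?v ` {1..?n})"
    using Max_in[OF _ ne] by auto
  have "\<forall>h'>0. ?v h' \<le> ?v h0"
  proof (intro allI impI)
    fix h' :: nat assume "0 < h'"
    show "?v h' \<le> ?v h0"
    proof (cases "h' \<le> ?n")
      case True
      have "?v h' \<le> Max (?v ` {1..?n})" using True \<open>0 < h'\<close> by (intro Max_ge) auto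
      then show ?thesis using h0 by simp
    next
      case False
      then have "?v h' = ?v ?n" using Vrec_stable[of T t h'] by auto
      also have "\<dots> \<le> ?v h0" unfolding h0(2) using assms by (intro Max_ge) auto
      finally show ?thesis .
    qed
  qed
  then show ?thesis using h0 by (intro exI[of _ h0]) auto
qed

lemma Vrec_meas:
  assumes "\<And>k. 1 \<le> k \<Longrightarrow> k \<le> T \<Longrightarrow> (\<lambda>\<omega>. r k \<omega>) \<in> borel_measurable N"
    and "\<And>k. 1 \<le> k \<Longrightarrow> k \<le> T \<Longrightarrow> (\<lambda>\<omega>. qt k \<omega>) \<in> borel_measurable N"
    and "1 \<le> k"
  shows "(\<lambda>\<omega>. Vrec \<gamma> T (\<lambda>k. r k \<omega>) (\<lambda>k. qt k \<omega>) k h) \<in> borel_measurable N"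
  using assms(3)
proof (induction h arbitrary: k)
  case 0
  then show ?case using assms by (cases "k \<le> T") auto
next
  case (Suc h)
  then show ?case using assms by (cases "k \<le> T") auto
qed

lemma fms: "prob_space M \<Longrightarrow> subalgebra M F \<Longrightarrow> sigma_finite_subalgebra M F"
  by (intro finite_measure_subalgebra_is_sigma_finite finite_measure_subalgebra.intro
      finite_measure_subalgebra_axioms.intro) (auto simp: prob_space_def)

lemma int_bdd_mult:
  fixes X f :: "'a \<Rightarrow> real"
  assumes "integrable M X" "f \<in> borel_measurable M" "\<And>x. \<bar>f x\<bar> \<le> 1"
  shows "integrable M (\<lambda>x. f x * X x)"
proof (rule Bochner_Integration.integrable_bound[OF assms(1)])
  show "(\<lambda>x. f x * X x) \<in> borel_measurable M" using assms by measurable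
  show "AE x in M. norm (f x * X x) \<le> norm (X x)"
    using assms(3) by (auto simp: abs_mult intro!: mult_left_le_one_le)
qed

lemma key_basic:
  fixes X :: "'a \<Rightarrow> real"
  assumes M: "prob_space M" and sF: "subalgebra M F" and sG: "subalgebra M G" and sH: "subalgebra M H"
    and ci: "\<And>D E. D \<in> sets G \<Longrightarrow> E \<in> sets H \<Longrightarrow> AE \<omega> in M.
        real_cond_exp M F (indicator (D \<inter> E)) \<omega> =
        real_cond_exp M F (indicator D) \<omega> * real_cond_exp M F (indicator E) \<omega>"
    and X: "integrable M X" "X \<in> borel_measurable H" and X0: "AE \<omega> in M. real_cond_exp M F X \<omega> = 0"
    and C: "C \<in> sets F" and D: "D \<in> sets G"
  shows "(\<integral>\<omega>. indicator (C \<inter> D) \<omega> * X \<omega> \<partial>M) = 0"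
proof -
  interpret P: prob_space M by fact
  interpret SF: sigma_finite_subalgebra M F using fms[OF M sF] .
  interpret SH: sigma_finite_subalgebra M H using fms[OF M sH] .
  have CM: "C \<in> sets M" using C sF by (auto simp: subalgebra_def)
  have DM: "D \<in> sets M" using D sG by (auto simp: subalgebra_def)
  define \<phi> where "\<phi> = real_cond_exp M F (indicator D)"
  define \<psi> where "\<psi> = (\<lambda>\<omega>. max 0 (min 1 (\<phi> \<omega>)))"
  have intD: "integrable M (indicator D :: 'a \<Rightarrow> real)"
    using DM by (intro P.integrable_const_bound[where B=1]) auto
  have "AE \<omega> in M. \<phi> \<omega> \<ge> 0" unfolding \<phi>_def
    by (rule SF.real_cond_exp_ge_c[OF intD]) auto
  moreover have "AE \<omega> in M. \<phi> \<omega> \<le> 1" unfolding \<phi>_def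
    by (rule SF.real_cond_exp_le_c[OF intD]) (auto simp: indicator_def)
  ultimately have phipsi: "AE \<omega> in M. \<phi> \<omega> = \<psi> \<omega>" unfolding \<psi>_def by auto
  have psiF[measurable]: "\<psi> \<in> borel_measurable F" unfolding \<psi>_def \<phi>_def by measurable
  have psiM[measurable]: "\<psi> \<in> borel_measurable M" using measurable_from_subalg[OF sF psiF] .
  have psib: "\<And>\<omega>. \<bar>\<psi> \<omega>\<bar> \<le> 1" "\<And>\<omega>. 0 \<le> \<psi> \<omega>" unfolding \<psi>_def by auto
  have CF[measurable]: "(indicator C :: 'a \<Rightarrow> real) \<in> borel_measurable F" using C by simp
  have CM'[measurable]: "(indicator C :: 'a \<Rightarrow> real) \<in> borel_measurable M" using CM by simp
  have DM'[measurable]: "(indicator D :: 'a \<Rightarrow> real) \<in> borel_measurable M" using DM by simp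
  have XM[measurable]: "X \<in> borel_measurable M" using measurable_from_subalg[OF sH X(2)] .
  define Z where "Z = (\<lambda>\<omega>. indicator C \<omega> * indicator D \<omega> - indicator C \<omega> * \<psi> \<omega> :: real)"
  have ZM[measurable]: "Z \<in> borel_measurable M" unfolding Z_def by measurable
  have Zb: "\<And>\<omega>. \<bar>Z \<omega>\<bar> \<le> 1" unfolding Z_def using psib
    by (auto simp: indicator_def)
  have Zint: "integrable M Z" by (rule P.integrable_const_bound[where B=1]) (use Zb in auto)
  have stepa: "(\<integral>\<omega> \<in> E. Z \<omega> \<partial>M) = (\<integral>\<omega> \<in> E. 0 \<partial>M)" if E: "E \<in> sets H" for E
  proof -
    have EM: "E \<in> sets M" using E sH by (auto simp: subalgebra_def)
    have EM'[measurable]: "(indicator E :: 'a \<Rightarrow> real) \<in> borel_measurable M" using EM by simp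
    have intE: "integrable M (indicator E :: 'a \<Rightarrow> real)"
      using EM by (intro P.integrable_const_bound[where B=1]) auto
    have intDE: "integrable M (indicator (D \<inter> E) :: 'a \<Rightarrow> real)"
      using EM DM by (intro P.integrable_const_bound[where B=1]) auto
    have "(\<integral>\<omega>. indicator C \<omega> * indicator (D \<inter> E) \<omega> \<partial>M)
        = (\<integral>\<omega>. indicator C \<omega> * real_cond_exp M F (indicator (D \<inter> E)) \<omega> \<partial>M)"
    proof (rule SF.real_cond_exp_intg(2)[symmetric])
      show "integrable M (\<lambda>\<omega>. indicator C \<omega> * indicator (D \<inter> E) \<omega> :: real)"
        using CM DM EM by (intro P.integrable_const_bound[where B=1]) (auto simp: indicator_def)
    qed (use CF CM DM EM in auto)
    also have "\<dots> = (\<integral>\<omega>. (indicator C \<omega> * \<psi> \<omega>) * real_cond_exp M F (indicator E) \<omega> \<partial>M)"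
      using ci[OF D E] phipsi unfolding \<phi>_def by (intro integral_cong_AE) auto
    also have "\<dots> = (\<integral>\<omega>. (indicator C \<omega> * \<psi> \<omega>) * indicator E \<omega> \<partial>M)"
    proof (rule SF.real_cond_exp_intg(2))
      show "integrable M (\<lambda>\<omega>. (indicator C \<omega> * \<psi> \<omega>) * indicator E \<omega> :: real)"
        using CM EM psib by (intro P.integrable_const_bound[where B=1]) (auto simp: indicator_def)
      show "(\<lambda>\<omega>. indicator C \<omega> * \<psi> \<omega>) \<in> borel_measurable F" by measurable
    qed (use EM in auto)
    finally have eq: "(\<integral>\<omega>. indicator C \<omega> * indicator (D \<inter> E) \<omega> \<partial>M) = (\<integral>\<omega>. (indicator C \<omega> * \<psi> \<omega>) * indicator E \<omega> \<partial>M)" .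
    have "(\<integral>\<omega> \<in> E. Z \<omega> \<partial>M) = (\<integral>\<omega>. indicator C \<omega> * indicator (D \<inter> E) \<omega> - (indicator C \<omega> * \<psi> \<omega>) * indicator E \<omega> \<partial>M)"
      unfolding set_lebesgue_integral_def Z_def by (intro Bochner_Integration.integral_cong) (auto simp: indicator_def)
    also have "\<dots> = 0"
      using eq by (subst Bochner_Integration.integral_diff) (use CM DM EM psib in \<open>auto intro!: P.integrable_const_bound[where B=1] simp: indicator_def\<close>)
    finally show ?thesis by simp
  qed
  have ZH: "AE \<omega> in M. real_cond_exp M H Z \<omega> = 0"
    by (rule SH.real_cond_exp_charact) (use stepa Zint in auto)
  have "(\<integral>\<omega>. X \<omega> * Z \<omega> \<partial>M) = (\<integral>\<omega>. X \<omega> * real_cond_exp M H Z \<omega> \<partial>M)"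
    by (rule SH.real_cond_exp_intg(2)[symmetric]) (use int_bdd_mult[OF X(1) ZM Zb] X(2) in \<open>auto simp: mult.commute\<close>)
  also have "\<dots> = 0" using ZH by (subst integral_cong_AE[where g="\<lambda>_. 0"]) auto
  finally have i1: "(\<integral>\<omega>. X \<omega> * Z \<omega> \<partial>M) = 0" .
  have psiC: "\<And>\<omega>. \<bar>indicator C \<omega> * \<psi> \<omega>\<bar> \<le> 1" using psib by (auto simp: indicator_def)
  have "(\<integral>\<omega>. (indicator C \<omega> * \<psi> \<omega>) * X \<omega> \<partial>M) = (\<integral>\<omega>. (indicator C \<omega> * \<psi> \<omega>) * real_cond_exp M F X \<omega> \<partial>M)"
    by (rule SF.real_cond_exp_intg(2)[symmetric]) (use int_bdd_mult[OF X(1) _ psiC] in auto)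
  also have "\<dots> = 0" using X0 by (subst integral_cong_AE[where g="\<lambda>_. 0"]) auto
  finally have i2: "(\<integral>\<omega>. (indicator C \<omega> * \<psi> \<omega>) * X \<omega> \<partial>M) = 0" .
  have "(\<integral>\<omega>. indicator (C \<inter> D) \<omega> * X \<omega> \<partial>M) = (\<integral>\<omega>. Z \<omega> * X \<omega> + (indicator C \<omega> * \<psi> \<omega>) * X \<omega> \<partial>M)"
    unfolding Z_def by (intro Bochner_Integration.integral_cong) (auto simp: indicator_def algebra_simps)
  also have "\<dots> = (\<integral>\<omega>. Z \<omega> * X \<omega> \<partial>M) + (\<integral>\<omega>. (indicator C \<omega> * \<psi> \<omega>) * X \<omega> \<partial>M)"
    by (rule Bochner_Integration.integral_add) (use int_bdd_mult[OF X(1) ZM Zb] int_bdd_mult[OF X(1) _ psiC] in auto)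
  also have "\<dots> = 0" using i1 i2 by (simp add: mult.commute)
  finally show ?thesis .
qed

lemma key:
  fixes X :: "'a \<Rightarrow> real"
  assumes M: "prob_space M" and sF: "subalgebra M F" and sG: "subalgebra M G" and sH: "subalgebra M H"
    and ci: "\<And>D E. D \<in> sets G \<Longrightarrow> E \<in> sets H \<Longrightarrow> AE \<omega> in M.
        real_cond_exp M F (indicator (D \<inter> E)) \<omega> =
        real_cond_exp M F (indicator D) \<omega> * real_cond_exp M F (indicator E) \<omega>"
    and X: "integrable M X" "X \<in> borel_measurable H" and X0: "AE \<omega> in M. real_cond_exp M F X \<omega> = 0"
    and B: "B \<in> sigma_sets (space M) {C \<inter> D | C D. C \<in> sets F \<and> D \<in> sets G}"
  shows "(\<integral>\<omega>. indicator B \<omega> * X \<omega> \<partial>M) = 0"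
proof -
  interpret P: prob_space M by fact
  interpret SF: sigma_finite_subalgebra M F using fms[OF M sF] .
  let ?G = "{C \<inter> D | C D. C \<in> sets F \<and> D \<in> sets G}"
  have GM: "?G \<subseteq> sets M" using sF sG by (auto simp: subalgebra_def)
  have sub: "sigma_sets (space M) ?G \<subseteq> sets M"
    using GM by (rule sigma_algebra.sigma_sets_subset[OF sets.sigma_algebra_axioms])
  have XM[measurable]: "X \<in> borel_measurable M" using measurable_from_subalg[OF sH X(2)] .
  have intX: "(\<integral>\<omega>. X \<omega> \<partial>M) = 0"
  proof -
    have "(\<integral>\<omega>. X \<omega> \<partial>M) = (\<integral>\<omega>. real_cond_exp M F X \<omega> \<partial>M)"
      using SF.real_cond_exp_int(2)[OF X(1)] by simp
    also have "\<dots> = 0" using X0 by (subst integral_cong_AE[where g="\<lambda>_. 0"]) auto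
    finally show ?thesis .
  qed
  have ist: "Int_stable ?G"
    unfolding Int_stable_def
  proof (intro ballI)
    fix a b assume "a \<in> ?G" "b \<in> ?G"
    then obtain C1 D1 C2 D2 where "a = C1 \<inter> D1" "b = C2 \<inter> D2" "C1 \<in> sets F" "D1 \<in> sets G"
      "C2 \<in> sets F" "D2 \<in> sets G" by blast
    then show "a \<inter> b \<in> ?G" by (intro CollectI exI[of _ "C1 \<inter> C2"] exI[of _ "D1 \<inter> D2"]) auto
  qed
  have pow: "?G \<subseteq> Pow (space M)" using GM sets.sets_into_space by auto
  from ist pow B show ?thesis
  proof (induction rule: sigma_sets_induct_disjoint)
    case (basic A)
    then obtain C D where "A = C \<inter> D" "C \<in> sets F" "D \<in> sets G" by blast
    then show ?case using key_basic[OF M sF sG sH ci X X0] by blast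
  next
    case empty
    then show ?case by simp
  next
    case (compl A)
    have AM: "A \<in> sets M" using compl(1) sub by auto
    have "(\<integral>\<omega>. indicator (space M - A) \<omega> * X \<omega> \<partial>M) = (\<integral>\<omega>. X \<omega> - indicator A \<omega> * X \<omega> \<partial>M)"
      by (intro Bochner_Integration.integral_cong) (auto simp: indicator_def)
    also have "\<dots> = (\<integral>\<omega>. X \<omega> \<partial>M) - (\<integral>\<omega>. indicator A \<omega> * X \<omega> \<partial>M)"
      by (rule Bochner_Integration.integral_diff) (use integrable_mult_indicator[OF AM X(1)] integrable_mult_indicator[OF AM(1) X(1)] X(1) in auto)
    also have "\<dots> = 0" using intX compl(2) by simp
    finally show ?case .
  next
    case (union A)
    have AM: "\<And>i. A i \<in> sets M" using union(2) sub by auto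
    define s where "s = (\<lambda>n \<omega>. indicator (\<Union>i<n. A i) \<omega> * X \<omega> :: real)"
    have s_eq: "s n \<omega> = (\<Sum>i<n. indicator (A i) \<omega> * X \<omega>)" for n \<omega>
    proof -
      have "indicator (\<Union>i<n. A i) \<omega> = (\<Sum>i<n. indicator (A i) \<omega> :: real)"
        using union(1) by (intro indicator_UN_disjoint) (auto simp: disjoint_family_on_def)
      then show ?thesis unfolding s_def by (simp add: sum_distrib_right)
    qed
    have int_s: "(\<integral>\<omega>. s n \<omega> \<partial>M) = 0" for n
    proof -
      have "(\<integral>\<omega>. s n \<omega> \<partial>M) = (\<Sum>i<n. (\<integral>\<omega>. indicator (A i) \<omega> * X \<omega> \<partial>M))"
        unfolding s_eq by (rule Bochner_Integration.integral_sum) (use integrable_mult_indicator[OF AM X(1)] integrable_mult_indicator[OF AM(1) X(1)] X(1) in auto)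
      also have "\<dots> = 0" using union(3) by simp
      finally show ?thesis .
    qed
    have UM: "(\<Union>i. A i) \<in> sets M" using AM by auto
    have "(\<lambda>n. (\<integral>\<omega>. s n \<omega> \<partial>M)) \<longlonglongrightarrow> (\<integral>\<omega>. indicator (\<Union>i. A i) \<omega> * X \<omega> \<partial>M)"
    proof (rule integral_dominated_convergence[where w="\<lambda>\<omega>. norm (X \<omega>)"])
      show "(\<lambda>\<omega>. indicator (\<Union>i. A i) \<omega> * X \<omega>) \<in> borel_measurable M" using UM by measurable
      show "s i \<in> borel_measurable M" for i unfolding s_def using AM by measurable
      show "integrable M (\<lambda>\<omega>. norm (X \<omega>))" using X(1) by simp
      show "AE \<omega> in M. (\<lambda>i. s i \<omega>) \<longlonglongrightarrow> indicator (\<Union>i. A i) \<omega> * X \<omega>"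
        unfolding s_def by (intro AE_I2 tendsto_mult_right LIMSEQ_indicator_UN)
      show "AE \<omega> in M. norm (s i \<omega>) \<le> norm (X \<omega>)" for i
        unfolding s_def by (intro AE_I2) (auto simp: indicator_def)
    qed
    then show ?case using int_s by (simp add: LIMSEQ_const_iff)
  qed
qed

lemma vimage_sub:
  assumes "f \<in> measurable M Y"
  shows "subalgebra M (vimage_algebra (space M) f Y)"
  unfolding subalgebra_def
proof
  show "space (vimage_algebra (space M) f Y) = space M" by simp
  have fs: "f \<in> space M \<rightarrow> space Y" using measurable_space[OF assms] by auto
  show "sets (vimage_algebra (space M) f Y) \<subseteq> sets M"
    unfolding sets_vimage_algebra2[OF fs] using measurable_sets[OF assms] by auto
qed

lemma meas_lift:
  assumes "sets F \<subseteq> sets N" "space F = space N" "g \<in> measurable F Z"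
  shows "g \<in> measurable N Z"
  using measurable_mono[of Z Z F N] assms by auto

lemma traj_facts:
  fixes M :: "'w measure" and S :: "'s measure" and A :: "'b measure"
  assumes s_meas: "\<And>k. s k \<in> measurable M S"
    and a_meas: "\<And>k. a k \<in> measurable M A"
    and r_meas: "\<And>k. r k \<in> borel_measurable M"
    and Q_meas: "(\<lambda>(x, y). Q x y) \<in> borel_measurable (S \<Otimes>\<^sub>M A)"
  shows "subalgebra M (traj_sigma M S A T s a r)"
    and "\<And>k. k \<in> {1..T} \<Longrightarrow> r k \<in> borel_measurable (traj_sigma M S A T s a r)"
    and "\<And>k. k \<in> {1..T} \<Longrightarrow> (\<lambda>\<omega>. Q (s k \<omega>) (a k \<omega>)) \<in> borel_measurable (traj_sigma M S A T s a r)"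
proof -
  note [measurable] = s_meas a_meas r_meas Q_meas
  define f where "f = (\<lambda>\<omega>. \<lambda>k\<in>{1..T}. (s k \<omega>, a k \<omega>, r k \<omega>, s (Suc k) \<omega>))"
  have fM: "f \<in> measurable M (PiM {1..T} (\<lambda>_. S \<Otimes>\<^sub>M A \<Otimes>\<^sub>M borel \<Otimes>\<^sub>M S))"
    unfolding f_def by measurable
  have F: "traj_sigma M S A T s a r = vimage_algebra (space M) f (PiM {1..T} (\<lambda>_. S \<Otimes>\<^sub>M A \<Otimes>\<^sub>M borel \<Otimes>\<^sub>M S))"
    unfolding traj_sigma_def f_def ..
  show "subalgebra M (traj_sigma M S A T s a r)" unfolding F by (rule vimage_sub[OF fM])
  have fF[measurable]: "f \<in> measurable (traj_sigma M S A T s a r) (PiM {1..T} (\<lambda>_. S \<Otimes>\<^sub>M A \<Otimes>\<^sub>M borel \<Otimes>\<^sub>M S))"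
    unfolding F by (rule measurable_vimage_algebra1) (use measurable_space[OF fM] in auto)
  fix k assume k: "k \<in> {1..T}"
  have m1: "(\<lambda>\<omega>. fst (snd (snd (f \<omega> k)))) \<in> borel_measurable (traj_sigma M S A T s a r)"
    using k by measurable
  then show "r k \<in> borel_measurable (traj_sigma M S A T s a r)"
    by (rule measurable_cong[THEN iffD1, rotated]) (use k in \<open>simp add: f_def\<close>)
  have m2: "(\<lambda>\<omega>. (\<lambda>(x, y). Q x y) (fst (f \<omega> k), fst (snd (f \<omega> k)))) \<in> borel_measurable (traj_sigma M S A T s a r)"
    using k by measurable
  then show "(\<lambda>\<omega>. Q (s k \<omega>) (a k \<omega>)) \<in> borel_measurable (traj_sigma M S A T s a r)"
    by (rule measurable_cong[THEN iffD1, rotated]) (use k in \<open>simp add: f_def\<close>)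
qed

lemma noise_facts:
  assumes "\<And>k. k \<in> {1..T} \<Longrightarrow> e k \<in> borel_measurable M"
  shows "subalgebra M (noise_sigma M T e)"
    and "\<And>k. k \<in> {1..T} \<Longrightarrow> e k \<in> borel_measurable (noise_sigma M T e)"
proof -
  define f where "f = (\<lambda>\<omega>. \<lambda>k\<in>{1..T}. e k \<omega>)"
  have fM: "f \<in> measurable M (PiM {1..T} (\<lambda>_. borel))"
    unfolding f_def by (rule measurable_restrict) (use assms in auto)
  have F: "noise_sigma M T e = vimage_algebra (space M) f (PiM {1..T} (\<lambda>_. borel))"
    unfolding noise_sigma_def f_def ..
  show "subalgebra M (noise_sigma M T e)" unfolding F by (rule vimage_sub[OF fM])
  have fF[measurable]: "f \<in> measurable (noise_sigma M T e) (PiM {1..T} (\<lambda>_. borel))"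
    unfolding F by (rule measurable_vimage_algebra1) (use measurable_space[OF fM] in auto)
  fix k assume k: "k \<in> {1..T}"
  have m1: "(\<lambda>\<omega>. f \<omega> k) \<in> borel_measurable (noise_sigma M T e)"
    using k by measurable
  then show "e k \<in> borel_measurable (noise_sigma M T e)"
    by (rule measurable_cong[THEN iffD1, rotated]) (use k in \<open>simp add: f_def\<close>)
qed

theorem theorem1:
  fixes M :: "'w measure" and S :: "'s measure" and A :: "'b measure"
    and T t :: nat and \<gamma> :: real
    and s :: "nat \<Rightarrow> 'w \<Rightarrow> 's" and a :: "nat \<Rightarrow> 'w \<Rightarrow> 'b" and r :: "nat \<Rightarrow> 'w \<Rightarrow> real"
    and Q :: "'s \<Rightarrow> 'b \<Rightarrow> real"
    and eps :: "nat \<Rightarrow> nat \<Rightarrow> 'w \<Rightarrow> real"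
    and sel :: "(nat \<Rightarrow> real) \<Rightarrow> nat"
    and i :: nat
  assumes M: "prob_space M"
    and gamma: "0 \<le> \<gamma>" "\<gamma> < 1"
    and t: "1 \<le> t" "t \<le> T"
    and s_meas: "\<And>k. s k \<in> measurable M S"
    and a_meas: "\<And>k. a k \<in> measurable M A"
    and r_meas: "\<And>k. r k \<in> borel_measurable M"
    and Q_meas: "(\<lambda>(x, y). Q x y) \<in> borel_measurable (S \<Otimes>\<^sub>M A)"
    and eps_int: "\<And>i k. i \<in> {1, 2} \<Longrightarrow> k \<in> {1..T} \<Longrightarrow> integrable M (eps i k)"
    and eps_centered: "\<And>i k. i \<in> {1, 2} \<Longrightarrow> k \<in> {1..T} \<Longrightarrow>
        AE \<omega> in M. real_cond_exp M (traj_sigma M S A T s a r) (eps i k) \<omega> = 0"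
    and eps_indep: "cond_indep M (traj_sigma M S A T s a r)
        (noise_sigma M T (eps 1)) (noise_sigma M T (eps 2))"
    and sel_argmax: "\<And>v. (\<exists>h>0. \<forall>h'>0. v h' \<le> v h) \<Longrightarrow>
        0 < sel v \<and> (\<forall>h'>0. v h' \<le> v (sel v))"
    and sel_meas: "sel \<in> measurable (PiM UNIV (\<lambda>_. borel)) (count_space UNIV)"
    and i: "i \<in> {1, 2}"
    and R_int: "integrable M (\<lambda>\<omega>.
        let V = (\<lambda>m h. Vrec \<gamma> T (\<lambda>k. r k \<omega>) (\<lambda>k. Q (s k \<omega>) (a k \<omega>) + eps m k \<omega>) t h)
        in V (3 - i) (sel (V i)))"
    and maxQ_int: "integrable M (\<lambda>\<omega>.
        Max ((\<lambda>h. Qth \<gamma> T (\<lambda>k. r k \<omega>) (\<lambda>k. Q (s k \<omega>) (a k \<omega>)) t h) ` {0..T - t}))"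
  shows "(\<integral>\<omega>. (let V = (\<lambda>m h. Vrec \<gamma> T (\<lambda>k. r k \<omega>) (\<lambda>k. Q (s k \<omega>) (a k \<omega>) + eps m k \<omega>) t h)
                 in V (3 - i) (sel (V i))) \<partial>M)
         \<le> (\<integral>\<omega>. Max ((\<lambda>h. Qth \<gamma> T (\<lambda>k. r k \<omega>) (\<lambda>k. Q (s k \<omega>) (a k \<omega>)) t h) ` {0..T - t}) \<partial>M)"
proof -
  interpret P: prob_space M by (rule M)
  note [measurable] = s_meas a_meas r_meas Q_meas
  define F where "F = traj_sigma M S A T s a r"
  define G where "G = (\<lambda>m. noise_sigma M T (eps m))"
  define j where "j = 3 - i"
  have j: "j \<in> {1,2}" "i \<noteq> j" using i unfolding j_def by auto
  have epsM: "\<And>m k. m \<in> {1,2} \<Longrightarrow> k \<in> {1..T} \<Longrightarrow> eps m k \<in> borel_measurable M"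
    using eps_int by auto
  have sF: "subalgebra M F" and rF: "\<And>k. k \<in> {1..T} \<Longrightarrow> r k \<in> borel_measurable F"
    and qF: "\<And>k. k \<in> {1..T} \<Longrightarrow> (\<lambda>\<omega>. Q (s k \<omega>) (a k \<omega>)) \<in> borel_measurable F"
    unfolding F_def using traj_facts[OF s_meas a_meas r_meas Q_meas] by auto
  have sG: "\<And>m. m \<in> {1,2} \<Longrightarrow> subalgebra M (G m)"
    and eG: "\<And>m k. m \<in> {1,2} \<Longrightarrow> k \<in> {1..T} \<Longrightarrow> eps m k \<in> borel_measurable (G m)"
    unfolding G_def using noise_facts[OF epsM] by auto
  have ci: "\<And>D E. D \<in> sets (G i) \<Longrightarrow> E \<in> sets (G j) \<Longrightarrow> AE \<omega> in M.
        real_cond_exp M F (indicator (D \<inter> E)) \<omega> =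
        real_cond_exp M F (indicator D) \<omega> * real_cond_exp M F (indicator E) \<omega>"
  proof -
    fix D E assume D: "D \<in> sets (G i)" and E: "E \<in> sets (G j)"
    show "AE \<omega> in M. real_cond_exp M F (indicator (D \<inter> E)) \<omega> =
        real_cond_exp M F (indicator D) \<omega> * real_cond_exp M F (indicator E) \<omega>"
    proof (cases "i = 1")
      case True
      then have "j = 2" unfolding j_def by simp
      then show ?thesis using eps_indep D E True unfolding cond_indep_def F_def G_def by auto
    next
      case False
      then have "i = 2" "j = 1" using i unfolding j_def by auto
      then have "AE \<omega> in M. real_cond_exp M F (indicator (E \<inter> D)) \<omega> =
        real_cond_exp M F (indicator E) \<omega> * real_cond_exp M F (indicator D) \<omega>"
        using eps_indep D E unfolding cond_indep_def F_def G_def by auto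
      then show ?thesis by (simp add: Int_commute mult.commute)
    qed
  qed
  define Gs where "Gs = {C \<inter> D | C D. C \<in> sets F \<and> D \<in> sets (G i)}"
  have GsM: "Gs \<subseteq> sets M" using sF sG[OF i] unfolding Gs_def by (auto simp: subalgebra_def)
  have GsP: "Gs \<subseteq> Pow (space M)" using GsM sets.sets_into_space by auto
  define N where "N = sigma (space M) Gs"
  have setsN: "sets N = sigma_sets (space M) Gs" unfolding N_def using GsP by simp
  have spaceN: "space N = space M" unfolding N_def using GsP by simp
  have spF: "space F = space M" using sF by (simp add: subalgebra_def)
  have spG: "space (G i) = space M" using sG[OF i] by (simp add: subalgebra_def)
  have FN: "sets F \<subseteq> sets N"
  proof
    fix C assume C: "C \<in> sets F"
    have "C \<subseteq> space M" using sets.sets_into_space[OF C] spF by auto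
    then have "C = C \<inter> space M" by auto
    moreover have "space M \<in> sets (G i)" using sets.top[of "G i"] spG by simp
    ultimately have "C \<in> Gs" unfolding Gs_def using C by blast
    then show "C \<in> sets N" unfolding setsN by auto
  qed
  have GN: "sets (G i) \<subseteq> sets N"
  proof
    fix D assume D: "D \<in> sets (G i)"
    have "D \<subseteq> space M" using sets.sets_into_space[OF D] spG by auto
    then have "D = space M \<inter> D" by auto
    moreover have "space M \<in> sets F" using sets.top[of F] spF by simp
    ultimately have "D \<in> Gs" unfolding Gs_def using D by blast
    then show "D \<in> sets N" unfolding setsN by auto
  qed
  define Vm where "Vm = (\<lambda>m \<omega>. (\<lambda>h. Vrec \<gamma> T (\<lambda>k. r k \<omega>) (\<lambda>k. Q (s k \<omega>) (a k \<omega>) + eps m k \<omega>) t h))"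
  have VN: "(\<lambda>\<omega>. Vm i \<omega> h) \<in> borel_measurable N" for h
    unfolding Vm_def
  proof (rule Vrec_meas[where r=r and qt="\<lambda>k \<omega>. Q (s k \<omega>) (a k \<omega>) + eps i k \<omega>"])
    fix k assume k: "1 \<le> k" "k \<le> T"
    show "(\<lambda>\<omega>. r k \<omega>) \<in> borel_measurable N"
      by (rule meas_lift[OF FN]) (use spF spaceN rF k in auto)
    have "(\<lambda>\<omega>. Q (s k \<omega>) (a k \<omega>)) \<in> borel_measurable N"
      by (rule meas_lift[OF FN]) (use spF spaceN qF k in auto)
    moreover have "eps i k \<in> borel_measurable N"
      by (rule meas_lift[OF GN]) (use spG spaceN eG[OF i] k in auto)
    ultimately show "(\<lambda>\<omega>. Q (s k \<omega>) (a k \<omega>) + eps i k \<omega>) \<in> borel_measurable N" by measurable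
  qed (use t in auto)
  have VNp: "Vm i \<in> measurable N (PiM UNIV (\<lambda>_. borel))"
    using measurable_PiM_single'[where f="\<lambda>h \<omega>. Vm i \<omega> h" and I=UNIV and M="\<lambda>_. borel", OF VN]
    by simp
  have selN: "(\<lambda>\<omega>. sel (Vm i \<omega>)) \<in> measurable N (count_space UNIV)"
    using measurable_comp[OF VNp sel_meas] by (simp add: comp_def)
  define Bk where "Bk = (\<lambda>k. {\<omega> \<in> space M. sel (Vm i \<omega>) = k})"
  have BkN: "Bk k \<in> sigma_sets (space M) Gs" for k
  proof -
    have "(\<lambda>\<omega>. sel (Vm i \<omega>)) -` {k} \<inter> space N \<in> sets N"
      by (rule measurable_sets[OF selN]) simp
    moreover have "(\<lambda>\<omega>. sel (Vm i \<omega>)) -` {k} \<inter> space N = Bk k"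
      unfolding Bk_def spaceN by auto
    ultimately show ?thesis using setsN by simp
  qed
  have BkM: "Bk k \<in> sets M" for k
    using BkN sigma_algebra.sigma_sets_subset[OF sets.sigma_algebra_axioms GsM] by auto
  have zero: "(\<integral>\<omega>. indicator (Bk k) \<omega> * eps j (t + k) \<omega> \<partial>M) = 0" if k: "k \<in> {1..T-t}" for k
  proof (rule key[OF M sF sG[OF i] sG[OF j(1)] ci])
    have tk: "t + k \<in> {1..T}" using k t by auto
    show "integrable M (eps j (t + k))" using eps_int[OF j(1) tk] .
    show "eps j (t + k) \<in> borel_measurable (G j)" using eG[OF j(1) tk] .
    show "AE \<omega> in M. real_cond_exp M F (eps j (t + k)) \<omega> = 0"
      using eps_centered[OF j(1) tk] unfolding F_def .
    show "Bk k \<in> sigma_sets (space M) {C \<inter> D |C D. C \<in> sets F \<and> D \<in> sets (G i)}"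
      using BkN unfolding Gs_def .
  qed
  define Nn where "Nn = (\<lambda>\<omega>. \<Sum>k\<in>{1..T-t}. \<gamma>^k * (indicator (Bk k) \<omega> * eps j (t + k) \<omega>))"
  have intk: "integrable M (\<lambda>\<omega>. indicator (Bk k) \<omega> * eps j (t + k) \<omega>)" if k: "k \<in> {1..T-t}" for k
  proof -
    have tk: "t + k \<in> {1..T}" using k t by auto
    show ?thesis using integrable_mult_indicator[OF BkM eps_int[OF j(1) tk]] by simp
  qed
  have Nn_int: "integrable M Nn" unfolding Nn_def using intk by auto
  have Nn_zero: "(\<integral>\<omega>. Nn \<omega> \<partial>M) = 0"
    unfolding Nn_def using intk zero by (subst Bochner_Integration.integral_sum) auto
  define Mx where "Mx = (\<lambda>\<omega>. Max ((\<lambda>h. Qth \<gamma> T (\<lambda>k. r k \<omega>) (\<lambda>k. Q (s k \<omega>) (a k \<omega>)) t h) ` {0..T - t}))"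
  define R where "R = (\<lambda>\<omega>. let V = (\<lambda>m h. Vrec \<gamma> T (\<lambda>k. r k \<omega>) (\<lambda>k. Q (s k \<omega>) (a k \<omega>) + eps m k \<omega>) t h)
                 in V (3 - i) (sel (V i)))"
  have R_eq: "R \<omega> = Vm j \<omega> (sel (Vm i \<omega>))" for \<omega>
    unfolding R_def Vm_def j_def by (simp add: Let_def)
  have pw: "R \<omega> \<le> Mx \<omega> + Nn \<omega>" if \<omega>: "\<omega> \<in> space M" for \<omega>
  proof -
    define hs where "hs = sel (Vm i \<omega>)"
    have "\<exists>h>0. \<forall>h'>0. Vm i \<omega> h' \<le> Vm i \<omega> h"
      unfolding Vm_def by (rule Vrec_argmax) (use t in auto)
    then have hs0: "0 < hs" using sel_argmax unfolding hs_def by blast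
    let ?q = "\<lambda>k. Q (s k \<omega>) (a k \<omega>)"
    let ?E = "if t + hs \<le> T then \<gamma>^hs * eps j (t + hs) \<omega> else 0"
    have "R \<omega> = Vm j \<omega> hs" by (simp add: R_eq hs_def)
    also have "\<dots> = Vrec \<gamma> T (\<lambda>k. r k \<omega>) ?q t hs + ?E"
      unfolding Vm_def by (rule Vrec_add)
    also have "Vrec \<gamma> T (\<lambda>k. r k \<omega>) ?q t hs = Qth \<gamma> T (\<lambda>k. r k \<omega>) ?q t (min (hs-1) (T-t))"
      using hs0 t by (intro Vrec_Qth) auto
    also have "\<dots> \<le> Mx \<omega>" unfolding Mx_def by (intro Max_ge) auto
    also have "?E = Nn \<omega>"
    proof -
      have "Nn \<omega> = (\<Sum>k\<in>{1..T-t}. if hs = k then \<gamma>^k * eps j (t + k) \<omega> else 0)"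
        unfolding Nn_def Bk_def hs_def using \<omega> by (intro sum.cong) (auto simp: indicator_def)
      also have "\<dots> = (if hs \<in> {1..T-t} then \<gamma>^hs * eps j (t + hs) \<omega> else 0)"
        by (simp add: sum.delta)
      also have "\<dots> = ?E" using hs0 t by auto
      finally show ?thesis by simp
    qed
    finally show ?thesis by simp
  qed
  have "(\<integral>\<omega>. R \<omega> \<partial>M) \<le> (\<integral>\<omega>. Mx \<omega> + Nn \<omega> \<partial>M)"
    by (rule integral_mono) (use R_int maxQ_int Nn_int pw in \<open>auto simp: R_def Mx_def\<close>)
  also have "\<dots> = (\<integral>\<omega>. Mx \<omega> \<partial>M)"
    using maxQ_int Nn_int Nn_zero unfolding Mx_def by simp
  finally show ?thesis unfolding R_def Mx_def .
qed

end
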